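(* Let $M\ge 2$ and let $0<\gamma_1<\gamma_2<\cdots<\gamma_M$ be real numbers. For $\mathbf{p}=(p_1,\dots,p_M)^T\in\mathbb{R}_{\ge 0}^M$ define $$R_{\mathrm{sum}}(\mathbf{p})=\sum_{i=1}^{M}\log_2\left[1+\frac{p_i\gamma_i}{\sum_{j=i+1}^{M}p_j\gamma_i+1}\right]$$ (an empty sum being $0$). Then $R_{\mathrm{sum}}$ is a strictly concave function of $\mathbf{p}$ on $\mathbb{R}_{\ge 0}^M$.
   Context: This is the sum-rate (over a unit-bandwidth resource block) of an $M$-user downlink power-domain NOMA cluster in which user $i$ has normalized channel power gain $\gamma_i$ (channel gain divided by noise power) and transmit power $p_i$, and successive interference cancellation is performed in ascending order of channel gains: user $i$ cancels the signals of users $1,\dots,i-1$ and treats the signals of users $i+1,\dots,M$ as interference. *)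

theory Defs
  imports "HOL-Analysis.Analysis"
begin

text \<open>Vectors in R^M are represented as functions nat => real, components indexed by {1..M};
  the nonnegative orthant additionally requires all components outside {1..M} to be zero,
  so that points of the orthant correspond bijectively to vectors in R^M.\<close>

definition nonneg_orthant :: "nat \<Rightarrow> (nat \<Rightarrow> real) set" where
  "nonneg_orthant M = {p. (\<forall>i\<in>{1..M}. 0 \<le> p i) \<and> (\<forall>i. i \<notin> {1..M} \<longrightarrow> p i = 0)}"

definition strictly_concave_on :: "(nat \<Rightarrow> real) set \<Rightarrow> ((nat \<Rightarrow> real) \<Rightarrow> real) \<Rightarrow> bool" where
  "strictly_concave_on S f \<longleftrightarrow>
     (\<forall>x\<in>S. \<forall>y\<in>S. \<forall>t::real. 0 \<le> t \<and> t \<le> 1 \<longrightarrow> (\<lambda>i. t * x i + (1 - t) * y i) \<in> S) \<and>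
     (\<forall>x\<in>S. \<forall>y\<in>S. x \<noteq> y \<longrightarrow> (\<forall>t::real. 0 < t \<and> t < 1 \<longrightarrow>
        f (\<lambda>i. t * x i + (1 - t) * y i) > t * f x + (1 - t) * f y))"

definition R_sum :: "nat \<Rightarrow> (nat \<Rightarrow> real) \<Rightarrow> (nat \<Rightarrow> real) \<Rightarrow> real" where
  "R_sum M \<gamma> p = (\<Sum>i = 1..M. log 2 (1 + p i * \<gamma> i / ((\<Sum>j = i + 1..M. p j * \<gamma> i) + 1)))"

end

theory Submission imports Defs begin
lemma ln_lt: fixes z::real assumes "z>0" "z\<noteq>1" shows "ln z < z - 1"
proof -
  have s: "sqrt z > 0" using assms by simp
  have "sqrt z \<noteq> 1" using assms by auto
  have "ln z = 2 * ln (sqrt z)" using assms by (simp add: ln_sqrt)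
  also have "\<dots> \<le> 2 * (sqrt z - 1)" using ln_le_minus_one[OF s] by simp
  also have "\<dots> < z - 1"
  proof -
    have "(sqrt z - 1)^2 > 0" using \<open>sqrt z \<noteq> 1\<close> by simp
    then show ?thesis using assms by (simp add: power2_eq_square algebra_simps)
  qed
  finally show ?thesis .
qed

lemma ln_strict: fixes x y t :: real
  assumes "x>0" "y>0" "x\<noteq>y" "0<t" "t<1"
  shows "t* ln x + (1-t)* ln y < ln(t* x+(1-t)* y)"
proof -
  define m where "m = t* x+(1-t)* y"
  have m: "m > 0" unfolding m_def using assms by (simp add: add_pos_pos)
  have xm: "x \<noteq> m"
  proof
    assume "x = m" then have "(1-t)*(x-y) = 0" unfolding m_def by (simp add: algebra_simps)
    then show False using assms by simp
  qed
  have 1: "ln x - ln m < x/m - 1" using ln_lt[of "x/m"] xm m assms by (simp add: ln_div)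
  have 2: "ln y - ln m \<le> y/m - 1" using ln_le_minus_one[of "y/m"] m assms by (simp add: ln_div)
  have "t*(ln x - ln m) + (1-t)*(ln y - ln m) < t*(x/m-1) + (1-t)*(y/m-1)"
    using mult_strict_left_mono[OF 1, of t] mult_left_mono[OF 2, of "1-t"] assms by linarith
  also have "\<dots> = 0" using m unfolding m_def by (simp add: field_simps)
  finally show ?thesis unfolding m_def[symmetric] by (simp add: algebra_simps)
qed

lemma G_conc: fixes a b r u t :: real
  assumes "a > b" "b \<ge> 0" "r \<ge> 0" "u \<ge> 0" "0<t" "t<1"
  shows "t * log 2 ((1+a* r)/(1+b* r)) + (1-t) * log 2 ((1+a* u)/(1+b* u))
         \<le> log 2 ((1+a*(t* r+(1-t)* u))/(1+b*(t* r+(1-t)* u)))"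
    and "r \<noteq> u \<Longrightarrow> t * log 2 ((1+a* r)/(1+b* r)) + (1-t) * log 2 ((1+a* u)/(1+b* u))
         < log 2 ((1+a*(t* r+(1-t)* u))/(1+b*(t* r+(1-t)* u)))"
proof -
  define \<phi> where "\<phi> v = (1+a* v)/(1+b* v)" for v
  have a0: "a > 0" using assms by simp
  have pos: "\<phi> v > 0" if "v \<ge> 0" for v unfolding \<phi>_def using that assms a0
    by (intro divide_pos_pos add_pos_nonneg) auto
  define m where "m = t* r+(1-t)* u"
  have m0: "m \<ge> 0" unfolding m_def using assms by simp
  have conc: "t*\<phi> r + (1-t)*\<phi> u \<le> \<phi> m"
  proof -
    define X where "X = 1+b* r"
    define Y where "Y = 1+b* u"
    have X: "X > 0" "Y > 0" unfolding X_def Y_def using assms by (simp_all add: add_pos_nonneg)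
    have Z: "1+b* m = t* X+(1-t)* Y" unfolding X_def Y_def m_def by (simp add: algebra_simps)
    have Zp: "t* X+(1-t)* Y > 0" using X assms by (simp add: add_pos_pos)
    have key: "t/X + (1-t)/Y \<ge> 1/(t* X+(1-t)* Y)"
    proof -
      have "(t* Y+(1-t)* X)*(t* X+(1-t)* Y) - X* Y = t*(1-t)*(X-Y)^2"
        by (simp add: power2_eq_square algebra_simps)
      also have "\<dots> \<ge> 0" using assms by simp
      finally have "(t* Y+(1-t)* X)*(t* X+(1-t)* Y) \<ge> X* Y" by simp
      then have "(t* Y+(1-t)* X)/(X* Y) \<ge> 1/(t* X+(1-t)* Y)" using X Zp
        by (simp add: field_simps)
      moreover have "(t* Y+(1-t)* X)/(X* Y) = t/X + (1-t)/Y" using X by (simp add: field_simps)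
      ultimately show ?thesis by simp
    qed
    show ?thesis
    proof (cases "b = 0")
      case True then show ?thesis unfolding \<phi>_def m_def by (simp add: algebra_simps)
    next
      case False
      then have b: "b > 0" using assms by simp
      have e: "\<phi> v = a/b - (a/b - 1)/(1+b* v)" if "v \<ge> 0" for v
      proof -
        have q: "1 + b * v \<noteq> 0" using that b by (smt (verit) mult_nonneg_nonneg)
        define c where "c = a/b"
        have ac: "a = c*b" unfolding c_def using b by simp
        have "c - (c - 1)/(1+b * v) = (c*(1+b * v) - (c-1))/(1+b * v)"
          using q by (simp add: diff_divide_distrib)
        also have "\<dots> = (1 + a * v)/(1+b * v)" unfolding ac by (simp add: algebra_simps)
        finally show ?thesis unfolding \<phi>_def c_def by simp
      qed
      have c: "a/b - 1 > 0" using b assms by (simp add: field_simps)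
      have g: "t*(c - K/X) + (1-t)*(c - K/Y) = c - K*(t/X + (1-t)/Y)" for c K :: real
        by (simp add: algebra_simps)
      have "t*\<phi> r + (1-t)*\<phi> u = a/b - (a/b-1)*(t/X + (1-t)/Y)"
        using e[of r] e[of u] assms g[of "a/b" "a/b-1"] unfolding X_def Y_def by simp
      also have "\<dots> \<le> a/b - (a/b-1)*(1/(t* X+(1-t)* Y))"
        using mult_left_mono[OF key, of "a/b-1"] c by simp
      also have "\<dots> = \<phi> m" using e[OF m0] Z by simp
      finally show ?thesis .
    qed
  qed
  have cp: "t*\<phi> r + (1-t)*\<phi> u > 0" using pos assms by (simp add: add_pos_pos)
  have dr: "1+b * r \<noteq> 0" "1+b * u \<noteq> 0" using assms by (smt (verit) mult_nonneg_nonneg)+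
  have l2: "ln (2::real) > 0" by simp
  have step1: "ln (t*\<phi> r + (1-t)*\<phi> u) \<le> ln (\<phi> m)" using conc cp by simp
  show "t * log 2 ((1+a* r)/(1+b* r)) + (1-t) * log 2 ((1+a* u)/(1+b* u))
         \<le> log 2 ((1+a*(t* r+(1-t)* u))/(1+b*(t* r+(1-t)* u)))"
  proof (cases "r = u")
    case True then show ?thesis by (simp add: algebra_simps)
  next
    case False
    have "\<phi> r \<noteq> \<phi> u"
    proof
      assume "\<phi> r = \<phi> u"
      then have "(1+a* r)*(1+b* u) = (1+a* u)*(1+b* r)" unfolding \<phi>_def using dr
        by (simp add: frac_eq_eq)
      then have "(a-b)*(r-u) = 0" by (simp add: algebra_simps)
      then show False using False assms by simp
    qed
    then have "t* ln (\<phi> r) + (1-t)* ln (\<phi> u) < ln (\<phi> m)"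
      using ln_strict[of "\<phi> r" "\<phi> u" t] pos[of r] pos[of u] assms step1 by linarith
    then have "(t* ln (\<phi> r) + (1-t)* ln (\<phi> u))/ln 2 < ln (\<phi> m)/ln 2" using l2
      by (simp add: divide_strict_right_mono)
    then show ?thesis unfolding log_def \<phi>_def m_def by (simp add: add_divide_distrib)
  qed
  assume ne: "r \<noteq> u"
  have "\<phi> r \<noteq> \<phi> u"
  proof
    assume "\<phi> r = \<phi> u"
    then have "(1+a* r)*(1+b* u) = (1+a* u)*(1+b* r)" unfolding \<phi>_def using dr
      by (simp add: frac_eq_eq)
    then have "(a-b)*(r-u) = 0" by (simp add: algebra_simps)
    then show False using ne assms by simp
  qed
  then have "t* ln (\<phi> r) + (1-t)* ln (\<phi> u) < ln (\<phi> m)"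
    using ln_strict[of "\<phi> r" "\<phi> u" t] pos[of r] pos[of u] assms step1 by linarith
  then have "(t* ln (\<phi> r) + (1-t)* ln (\<phi> u))/ln 2 < ln (\<phi> m)/ln 2" using l2
    by (simp add: divide_strict_right_mono)
  then show "t * log 2 ((1+a* r)/(1+b* r)) + (1-t) * log 2 ((1+a* u)/(1+b* u))
         < log 2 ((1+a*(t* r+(1-t)* u))/(1+b*(t* r+(1-t)* u)))"
    unfolding log_def \<phi>_def m_def by (simp add: add_divide_distrib)
qed

lemma telesc:
  fixes F :: "nat \<Rightarrow> nat \<Rightarrow> real"
  shows "(\<Sum>i=1..Suc n. (F i i - F i (Suc i))) =
    (\<Sum>i=1..Suc n. (F i i - (if i=1 then 0 else F (i-1) i))) - F (Suc n) (Suc (Suc n))"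
  by (induction n) auto

theorem lemma1:
  fixes M :: nat and \<gamma> :: "nat \<Rightarrow> real"
  assumes "M \<ge> 2"
    and "0 < \<gamma> 1"
    and "\<And>i. 1 \<le> i \<Longrightarrow> i < M \<Longrightarrow> \<gamma> i < \<gamma> (i + 1)"
  shows "strictly_concave_on (nonneg_orthant M) (R_sum M \<gamma>)"
proof -
  define S where "S p i = (\<Sum>j=i..M. p j)" for p :: "nat \<Rightarrow> real" and i
  define A where "A i s = log 2 (1 + \<gamma> i * s)" for i and s :: real
  define gb where "gb i = (if i = 1 then 0 else \<gamma> (i-1))" for i
  define G where "G i s = log 2 ((1 + \<gamma> i * s)/(1 + gb i * s))" for i and s :: real
  have gpos: "1 \<le> i \<Longrightarrow> i \<le> M \<Longrightarrow> \<gamma> i > 0" for i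
  proof (induction i)
    case 0 then show ?case by simp
  next
    case (Suc i)
    show ?case
    proof (cases "i = 0")
      case True then show ?thesis using assms(2) by simp
    next
      case False
      then have "\<gamma> i > 0" using Suc by simp
      moreover have "\<gamma> i < \<gamma> (i+1)" using assms(3)[of i] Suc False by simp
      ultimately show ?thesis by simp
    qed
  qed
  have gmono: "gb i < \<gamma> i \<and> 0 \<le> gb i" if "1 \<le> i" "i \<le> M" for i
  proof (cases "i = 1")
    case True then show ?thesis using gpos[OF that] unfolding gb_def by simp
  next
    case False
    then have "\<gamma> (i-1) < \<gamma> (i-1+1)" using assms(3)[of "i-1"] that by simp
    moreover have "\<gamma> (i-1) > 0" using gpos[of "i-1"] that False by simp
    ultimately show ?thesis unfolding gb_def using False that by simp
  qed
  have Snn: "S p i \<ge> 0" if "p \<in> nonneg_orthant M" for p i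
    unfolding S_def using that unfolding nonneg_orthant_def by (auto intro!: sum_nonneg)
  have Ssplit: "S p i = p i + S p (i+1)" if "i \<le> M" for p i
    unfolding S_def using that by (simp add: sum.atLeast_Suc_atMost)
  have Sempty: "S p (Suc M) = 0" for p unfolding S_def by simp
  have Rrepr: "R_sum M \<gamma> p = (\<Sum>i=1..M. G i (S p i))" if p: "p \<in> nonneg_orthant M" for p
  proof -
    have trm: "log 2 (1 + p i * \<gamma> i / ((\<Sum>j = i + 1..M. p j * \<gamma> i) + 1))
        = A i (S p i) - A i (S p (Suc i))" if i: "i \<in> {1..M}" for i
    proof -
      have g: "\<gamma> i > 0" using gpos i by simp
      have s: "(\<Sum>j = i + 1..M. p j * \<gamma> i) = \<gamma> i * S p (Suc i)"
        unfolding S_def by (simp add: sum_distrib_left mult.commute)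
      have D: "1 + \<gamma> i * S p (Suc i) > 0" using g Snn[OF p] by (simp add: add_pos_nonneg)
      have E: "1 + \<gamma> i * S p i > 0" using g Snn[OF p] by (simp add: add_pos_nonneg)
      have "1 + p i * \<gamma> i / ((\<Sum>j = i + 1..M. p j * \<gamma> i) + 1)
          = (1 + \<gamma> i * S p i) / (1 + \<gamma> i * S p (Suc i))"
        using D Ssplit[of i p] i unfolding s by (simp add: field_simps)
      then show ?thesis unfolding A_def using D E by (simp add: log_divide)
    qed
    have Gi: "G i (S p i) = A i (S p i) - (if i=1 then 0 else A (i-1) (S p i))"
      if i: "i \<in> {1..M}" for i
    proof -
      have "\<gamma> i > 0" using gpos i by simp
      then have "1 + \<gamma> i * S p i > 0" using Snn[OF p, of i] by (simp add: add_pos_nonneg)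
      moreover have "gb i \<ge> 0" using gmono[of i] i by simp
      then have "1 + gb i * S p i > 0" using Snn[OF p, of i] by (simp add: add_pos_nonneg)
      ultimately show ?thesis unfolding G_def A_def gb_def by (simp add: log_divide)
    qed
    obtain n where n: "M = Suc n" using assms(1) by (cases M) auto
    have "R_sum M \<gamma> p = (\<Sum>i=1..M. A i (S p i) - A i (S p (Suc i)))"
      unfolding R_sum_def by (intro sum.cong refl) (use trm in simp)
    also have "\<dots> = (\<Sum>i=1..M. (A i (S p i) - (if i=1 then 0 else A (i-1) (S p i)))) - A M (S p (Suc M))"
      unfolding n using telesc[of "\<lambda>i k. A i (S p k)" n] by simp
    also have "A M (S p (Suc M)) = 0" unfolding A_def Sempty by simp
    also have "(\<Sum>i=1..M. (A i (S p i) - (if i=1 then 0 else A (i-1) (S p i)))) = (\<Sum>i=1..M. G i (S p i))"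
      by (rule sum.cong) (simp_all add: Gi)
    finally show ?thesis by simp
  qed
  have conv: "(\<lambda>i. t * x i + (1 - t) * y i) \<in> nonneg_orthant M"
    if "x \<in> nonneg_orthant M" "y \<in> nonneg_orthant M" "0 \<le> t" "t \<le> 1" for x y t
    using that unfolding nonneg_orthant_def by auto
  have strict: "R_sum M \<gamma> (\<lambda>i. t * x i + (1 - t) * y i) > t * R_sum M \<gamma> x + (1 - t) * R_sum M \<gamma> y"
    if x: "x \<in> nonneg_orthant M" and y: "y \<in> nonneg_orthant M" and xy: "x \<noteq> y"
      and t: "0 < t" "t < 1" for x y t
  proof -
    define z where "z = (\<lambda>i. t * x i + (1 - t) * y i)"
    have z: "z \<in> nonneg_orthant M" unfolding z_def using conv x y t by simp
    have Sz: "S z i = t * S x i + (1-t) * S y i" for i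
      unfolding S_def z_def by (simp add: sum.distrib sum_distrib_left)
    have ex: "\<exists>k\<in>{1..M}. S x k \<noteq> S y k"
    proof (rule ccontr)
      assume "\<not> ?thesis"
      then have h: "S x k = S y k" if "k \<in> {1..M}" for k using that by auto
      have "x k = y k" for k
      proof (cases "k \<in> {1..M}")
        case False then show ?thesis using x y unfolding nonneg_orthant_def by auto
      next
        case True
        have "S x (k+1) = S y (k+1)"
        proof (cases "k + 1 \<le> M")
          case True then show ?thesis using h by simp
        next
          case False then have "k = M" using \<open>k \<in> {1..M}\<close> by simp
          then show ?thesis using Sempty by simp
        qed
        then show ?thesis using Ssplit[of k x] Ssplit[of k y] h[OF True] True by simp
      qed
      then show False using xy by auto
    qed
    have le: "t * G i (S x i) + (1-t) * G i (S y i) \<le> G i (S z i)" if i: "i \<in> {1..M}" for i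
      unfolding G_def Sz using G_conc(1)[of "gb i" "\<gamma> i" "S x i" "S y i" t] gmono[of i] i
        Snn[OF x] Snn[OF y] t by simp
    have lt: "t * G i (S x i) + (1-t) * G i (S y i) < G i (S z i)"
      if i: "i \<in> {1..M}" and ne: "S x i \<noteq> S y i" for i
      unfolding G_def Sz using G_conc(2)[of "gb i" "\<gamma> i" "S x i" "S y i" t] gmono[of i] i
        Snn[OF x] Snn[OF y] t ne by simp
    have "t * R_sum M \<gamma> x + (1 - t) * R_sum M \<gamma> y
        = (\<Sum>i=1..M. t * G i (S x i) + (1-t) * G i (S y i))"
      using Rrepr[OF x] Rrepr[OF y] by (simp add: sum.distrib sum_distrib_left)
    also have "\<dots> < (\<Sum>i=1..M. G i (S z i))"
      proof (rule sum_strict_mono_ex1)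
      show "\<forall>i\<in>{1..M}. t * G i (S x i) + (1-t) * G i (S y i) \<le> G i (S z i)" using le by blast
      show "\<exists>i\<in>{1..M}. t * G i (S x i) + (1-t) * G i (S y i) < G i (S z i)" using ex lt by blast
    qed simp
    also have "\<dots> = R_sum M \<gamma> z" using Rrepr[OF z] by simp
    finally show ?thesis unfolding z_def .
  qed
  show ?thesis unfolding strictly_concave_on_def using conv strict by blast
qed

end
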